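(* Let $\zeta_1,\ldots,\zeta_n$ be independent Bernoulli random variables with $p_i=1-q_i=\mathbb{P}(\zeta_i=1)$, and $V_2=\sum_{i=1}^n\zeta_i$. Let $r>1$, $p\in(0,1)$, $q=1-p$ with $rq=p\sum_{i=1}^np_i$. Then $$\sup_{z\ge0}|\mathbb{E}[\mathscr{A}g_z(V_2)]|\le\left(2p^{-(r+1)}-p^{-1}\right)\sum_{i=1}^np_i(1-pq_i).$$
   Context: $x^+=\max\{x,0\}$. $\mathrm{N}_{r,p}$ is negative binomial with $\mathbb{P}(\mathrm{N}_{r,p}=k)=\binom{r+k-1}{k}p^rq^k$, $k\in\mathbb{Z}_+$. The Stein operator is $\mathscr{A}g(k)=q(r+k)g(k+1)-kg(k)$. For $z\ge0$, $g_z(0)=0$ and for $k\ge1$, $g_z(k)=-\sum_{j\ge k}\frac{r(r+1)\cdots(r+j-1)}{r(r+1)\cdots(r+k-1)}\frac{(k-1)!}{j!}q^{j-k}\big[(j-z)^+-\mathbb{E}[(\mathrm{N}_{r,p}-z)^+]\big]$, so that $\mathbb{E}[\mathscr{A}g_z(V)]=\mathbb{E}[(V-z)^+]-\mathbb{E}[(\mathrm{N}_{r,p}-z)^+]$. *)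

theory Defs
  imports "HOL-Probability.Probability"
begin

text \<open>Negative binomial pmf: P(N_{r,p} = k) = binom(r+k-1,k) p^r q^k,
  with binom(r+k-1,k) = r(r+1)...(r+k-1)/k! = pochhammer r k / k!.\<close>
definition negbin_prob :: "real \<Rightarrow> real \<Rightarrow> nat \<Rightarrow> real" where
  "negbin_prob r p k = pochhammer r k / fact k * p powr r * (1 - p) ^ k"

definition negbin_call :: "real \<Rightarrow> real \<Rightarrow> real \<Rightarrow> real" where
  "negbin_call r p z = (\<Sum>k. negbin_prob r p k * max (real k - z) 0)"

definition stein_g :: "real \<Rightarrow> real \<Rightarrow> real \<Rightarrow> nat \<Rightarrow> real" where
  "stein_g r p z k = (if k = 0 then 0 else
     - (\<Sum>m. (let j = k + m in
          pochhammer r j / pochhammer r k * fact (k - 1) / fact j * (1 - p) ^ (j - k)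
          * (max (real j - z) 0 - negbin_call r p z))))"

definition stein_op :: "real \<Rightarrow> real \<Rightarrow> (nat \<Rightarrow> real) \<Rightarrow> nat \<Rightarrow> real" where
  "stein_op r p g k = (1 - p) * (r + real k) * g (k + 1) - real k * g k"

definition bern_sum_pmf :: "nat \<Rightarrow> (nat \<Rightarrow> real) \<Rightarrow> nat pmf" where
  "bern_sum_pmf n ps = map_pmf (\<lambda>\<omega>. \<Sum>i\<in>{1..n}. of_bool (\<omega> i))
      (Pi_pmf {1..n} False (\<lambda>i. bernoulli_pmf (ps i)))"

end

theory Submission imports Defs begin

lemma nb_sums:
  fixes r p :: real assumes p: "0 < p" "p < 1"
  shows "negbin_prob r p sums 1"
proof -
  have "\<bar>-(1-p)\<bar> < 1" using p by simp
  from gen_binomial_real[OF this, of "-r"]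
  have s: "(\<lambda>n. ((-r) gchoose n) * (-(1-p))^n) sums p powr (-r)" by simp
  have e: "((-r) gchoose n) * (-(1-p))^n = pochhammer r n / fact n * (1-p)^n" for n
    by (simp add: gbinomial_pochhammer power_mult_distrib[symmetric] flip: power_minus )
  from sums_mult2[OF s[unfolded e], of "p powr r"]
  have "(\<lambda>n. pochhammer r n * (p powr r * (1 - p) ^ n) / fact n) sums 1"
    using p by (simp add: powr_minus mult_ac)
  moreover have "negbin_prob r p = (\<lambda>n. pochhammer r n * (p powr r * (1 - p) ^ n) / fact n)"
    by (auto simp: negbin_prob_def fun_eq_iff)
  ultimately show ?thesis by simp
qed

lemma nb_rec:
  fixes r p :: real
  shows "real (Suc k) * negbin_prob r p (Suc k) = (1-p) * (r + real k) * negbin_prob r p k"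
  by (simp add: negbin_prob_def pochhammer_Suc field_simps del: of_nat_Suc)

lemma nb_shift:
  fixes r p :: real assumes p: "0 < p"
  shows "real (Suc m) * negbin_prob r p (Suc m) = (r*(1-p)/p) * negbin_prob (r+1) p m"
proof -
  have "p powr (r+1) = p powr r * p" using p by (simp add: powr_add)
  then show ?thesis using p
    by (simp add: negbin_prob_def pochhammer_rec field_simps del: of_nat_Suc)
qed

lemma nb_mean:
  fixes r p :: real assumes p: "0 < p" "p < 1"
  shows "(\<lambda>k. real k * negbin_prob r p k) sums (r*(1-p)/p)"
proof -
  have "(\<lambda>m. (r*(1-p)/p) * negbin_prob (r+1) p m) sums ((r*(1-p)/p) * 1)"
    by (rule sums_mult[OF nb_sums[OF p]])
  hence "(\<lambda>m. real (Suc m) * negbin_prob r p (Suc m)) sums (r*(1-p)/p)"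
    using nb_shift[OF p(1)] by simp
  thus ?thesis by (subst (asm) sums_Suc_iff) simp
qed

lemma nb_nonneg: fixes r p :: real assumes "0 < p" "p < 1" "r > 0"
  shows "negbin_prob r p k \<ge> 0"
  using assms pochhammer_pos[of r k] by (simp add: negbin_prob_def)

lemma nb_pos: fixes r p :: real assumes "0 < p" "p < 1" "r > 0"
  shows "negbin_prob r p k > 0"
  using assms pochhammer_pos[of r k] by (simp add: negbin_prob_def)

lemma nb_tele:
  fixes r p :: real assumes p: "0 < p" "p < 1"
  shows "(\<Sum>j<k. negbin_prob r p j * (real j - r*(1-p)/p)) = - real k * negbin_prob r p k / p"
proof (induction k)
  case 0 then show ?case by simp
next
  case (Suc k)
  have "(\<Sum>j<Suc k. negbin_prob r p j * (real j - r*(1-p)/p))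
     = - real k * negbin_prob r p k / p + negbin_prob r p k * (real k - r*(1-p)/p)"
    using Suc by simp
  also have "\<dots> = - ((1-p) * (r + real k) * negbin_prob r p k) / p"
    using p by (simp add: field_simps)
  also have "\<dots> = - real (Suc k) * negbin_prob r p (Suc k) / p"
    by (subst nb_rec[symmetric]) (simp add: field_simps)
  finally show ?case .
qed

lemma mono_partial:
  fixes w f :: "nat \<Rightarrow> real"
  assumes w: "\<And>j. w j \<ge> 0" and ws: "w sums 1" and wf: "summable (\<lambda>j. w j * f j)"
    and mono: "\<And>i j. i \<le> j \<Longrightarrow> f i \<le> f j"
  shows "(\<Sum>j<k. w j * (f j - (\<Sum>j. w j * f j))) \<le> 0"
proof -
  define E where "E = (\<Sum>j. w j * f j)"
  define A where "A = (\<Sum>j<k. w j * f j)"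
  define P where "P = (\<Sum>j<k. w j)"
  have sw: "summable w" using ws by (simp add: sums_iff)
  have AP: "A \<le> P * f k" unfolding A_def P_def sum_distrib_right
    by (intro sum_mono) (auto intro!: mult_left_mono mono w)
  have tw: "(\<Sum>n. w (n + k)) = 1 - P"
    using suminf_split_initial_segment[OF sw, of k] ws by (simp add: sums_iff P_def)
  have twn: "(\<Sum>n. w (n + k)) \<ge> 0" using sw w by (intro suminf_nonneg) (auto simp: summable_iff_shift)
  have "(\<Sum>n. w (n + k) * f k) \<le> (\<Sum>n. w (n + k) * f (n + k))"
    apply (intro suminf_le)
    using w mono apply (auto intro!: mult_left_mono)[1]
    using sw apply (intro summable_mult2) apply (simp add: summable_iff_shift)
    using wf by (simp add: summable_iff_shift[where f="\<lambda>j. w j * f j"])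
  moreover have "(\<Sum>n. w (n + k) * f k) = (1 - P) * f k"
    using tw sw by (simp add: suminf_mult2[symmetric] summable_iff_shift)
  moreover have "E = (\<Sum>n. w (n + k) * f (n + k)) + A"
    unfolding E_def A_def using suminf_split_initial_segment[OF wf, of k] by simp
  ultimately have EA: "E \<ge> A + (1 - P) * f k" by simp
  have P1: "1 - P \<ge> 0" using tw twn by simp
  have "P * E \<ge> P * (A + (1-P) * f k)" using EA by (intro mult_left_mono) (auto simp: P_def w sum_nonneg)
  moreover have "(1 - P) * A \<le> (1 - P) * (P * f k)" using AP P1 by (intro mult_left_mono)
  ultimately have "A - P * E \<le> 0" by (simp add: algebra_simps)
  moreover have "(\<Sum>j<k. w j * (f j - E)) = A - P * E"
    unfolding A_def P_def by (simp add: algebra_simps sum_subtractf sum_distrib_right sum_distrib_left)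
  ultimately show ?thesis unfolding E_def by simp
qed

lemma g_formula:
  fixes r p z :: real assumes p: "0 < p" "p < 1" and r: "r > 0" and z: "z \<ge> 0" and k: "k \<ge> 1"
  shows "stein_g r p z k = (\<Sum>j<k. negbin_prob r p j * (max (real j - z) 0 - negbin_call r p z))
            / (real k * negbin_prob r p k)"
proof -
  define w where "w = negbin_prob r p"
  define c where "c = negbin_call r p z"
  define F where "F = (\<lambda>j. w j * (max (real j - z) 0 - c))"
  define D where "D = real k * w k"
  have Dpos: "D > 0" unfolding D_def w_def using k nb_pos[OF p r] by simp
  have sw: "summable w" using nb_sums[OF p] unfolding w_def by (simp add: sums_iff)
  have sj: "summable (\<lambda>j. w j * real j)" using nb_mean[OF p, of r] unfolding w_def
    by (simp add: sums_iff mult.commute)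
  have swh: "summable (\<lambda>j. w j * max (real j - z) 0)"
    apply (rule summable_comparison_test[OF _ sj])
    using z nb_nonneg[OF p r] by (auto simp: w_def intro!: exI[of _ 0] mult_left_mono)
  have c_def': "c = (\<Sum>j. w j * max (real j - z) 0)" unfolding c_def negbin_call_def w_def by simp
  have sF: "summable F" unfolding F_def right_diff_distrib
    by (intro summable_diff swh summable_mult2 sw)
  have F0: "suminf F = 0"
  proof -
    have "suminf F = (\<Sum>j. w j * max (real j - z) 0) - (\<Sum>j. w j * c)"
      unfolding F_def right_diff_distrib by (rule suminf_diff[symmetric]) (auto intro: swh summable_mult2 sw)
    also have "(\<Sum>j. w j * c) = c" using nb_sums[OF p] unfolding w_def
      by (simp add: suminf_mult2[symmetric] sums_iff)
    finally show ?thesis using c_def' by simp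
  qed
  have coef: "pochhammer r (k+m) / pochhammer r k * fact (k - 1) / fact (k+m) * (1 - p) ^ (k + m - k)
        = w (k+m) / D" for m
  proof -
    have fk: "fact k = real k * fact (k - 1)" using k by (simp add: fact_reduce)
    have pp: "p powr r > 0" using p by simp
    have pk: "pochhammer r k > 0" using pochhammer_pos r by blast
    show ?thesis unfolding D_def w_def negbin_prob_def fk using pp pk p k
      by (simp add: field_simps power_add)
  qed
  have eq: "(\<lambda>m. (let j = k + m in pochhammer r j / pochhammer r k * fact (k - 1) / fact j * (1 - p) ^ (j - k)
          * (max (real j - z) 0 - negbin_call r p z))) = (\<lambda>m. F (m + k) / D)"
    by (rule ext) (simp only: Let_def coef, simp add: F_def c_def add.commute)
  have "stein_g r p z k = - (\<Sum>m. F (m + k) / D)"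
    unfolding stein_g_def eq using k by simp
  also have "(\<Sum>m. F (m + k) / D) = (\<Sum>m. F (m + k)) / D"
    by (intro suminf_divide) (use sF in \<open>simp add: summable_iff_shift\<close>)
  also have "(\<Sum>m. F (m + k)) = - (\<Sum>j<k. F j)"
    using suminf_split_initial_segment[OF sF, of k] F0 by simp
  finally show ?thesis unfolding F_def D_def w_def c_def by simp
qed

lemma g_bounds:
  fixes r p z :: real assumes p: "0 < p" "p < 1" and r: "r > 0" and z: "z \<ge> 0" and k: "k \<ge> 1"
  shows "- 1 / p \<le> stein_g r p z k \<and> stein_g r p z k \<le> 0"
proof -
  define w where "w = negbin_prob r p"
  define c where "c = negbin_call r p z"
  define S where "S = (\<Sum>j<k. w j * (max (real j - z) 0 - c))"
  define D where "D = real k * w k"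
  have g: "stein_g r p z k = S / D" unfolding S_def D_def w_def c_def using g_formula[OF assms] by simp
  have Dpos: "D > 0" unfolding D_def w_def using k nb_pos[OF p r] by simp
  have wnn: "\<And>j. w j \<ge> 0" unfolding w_def using nb_nonneg[OF p r] by simp
  have ws: "w sums 1" unfolding w_def using nb_sums[OF p] .
  have sw: "summable w" using ws by (simp add: sums_iff)
  have mj: "(\<lambda>j. w j * real j) sums (r*(1-p)/p)" using nb_mean[OF p, of r] unfolding w_def
    by (simp add: mult.commute)
  have sj: "summable (\<lambda>j. w j * real j)" using mj by (simp add: sums_iff)
  have swh: "summable (\<lambda>j. w j * max (real j - z) 0)"
    apply (rule summable_comparison_test[OF _ sj])
    using z wnn by (auto intro!: exI[of _ 0] mult_left_mono)
  have swu: "summable (\<lambda>j. w j * min (real j) z)"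
    apply (rule summable_comparison_test[OF _ sj])
    using z wnn by (auto intro!: exI[of _ 0] mult_left_mono)
  have c_def': "c = (\<Sum>j. w j * max (real j - z) 0)" unfolding c_def negbin_call_def w_def by simp
  have up: "S \<le> 0" unfolding S_def c_def'
    by (rule mono_partial[OF wnn ws swh]) auto
  define U where "U = (\<Sum>j. w j * min (real j) z)"
  define mu where "mu = r*(1-p)/p"
  have hsplit: "max (real j - z) 0 = real j - min (real j) z" for j using z by auto
  have cU: "c = mu - U"
  proof -
    have "c = (\<Sum>j. w j * real j - w j * min (real j) z)" unfolding c_def'
      by (simp add: hsplit right_diff_distrib)
    also have "\<dots> = (\<Sum>j. w j * real j) - U" unfolding U_def by (rule suminf_diff[symmetric]) (auto intro: sj swu)
    finally show ?thesis using mj unfolding mu_def by (simp add: sums_iff)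
  qed
  have mp: "(\<Sum>j<k. w j * (min (real j) z - U)) \<le> 0" unfolding U_def
    by (rule mono_partial[OF wnn ws swu]) (auto simp: min_def)
  have "S = (\<Sum>j<k. w j * (real j - mu)) - (\<Sum>j<k. w j * (min (real j) z - U))"
    unfolding S_def cU hsplit sum_subtractf[symmetric] by (intro sum.cong) (auto simp: algebra_simps)
  also have "(\<Sum>j<k. w j * (real j - mu)) = - D / p"
    unfolding w_def mu_def D_def using nb_tele[OF p] by simp
  finally have lo: "S \<ge> - D / p" using mp by simp
  have "- 1 / p \<le> S / D" using lo Dpos p by (simp add: field_simps)
  moreover have "S / D \<le> 0" using up Dpos by (simp add: divide_nonpos_pos)
  ultimately show ?thesis using g by simp
qed



lemma fin_Pi: "finite A \<Longrightarrow> finite (set_pmf (Pi_pmf A dflt (\<lambda>i. bernoulli_pmf (q i))))"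
  by (subst set_Pi_pmf) (auto intro!: finite_PiE_dflt)

lemma intg_Pi[simp]: "finite A \<Longrightarrow> integrable (measure_pmf (Pi_pmf A dflt (\<lambda>i. bernoulli_pmf (q i)))) (f :: _ \<Rightarrow> real)"
  by (rule integrable_measure_pmf_finite[OF fin_Pi])

lemma pair_bern:
  fixes G :: "bool \<times> 'a \<Rightarrow> real"
  assumes M: "finite (set_pmf M)" and a: "0 \<le> a" "a \<le> 1"
  shows "measure_pmf.expectation (pair_pmf (bernoulli_pmf a) M) G
     = a * measure_pmf.expectation M (\<lambda>x. G (True, x)) + (1 - a) * measure_pmf.expectation M (\<lambda>x. G (False, x))"
proof -
  have "measure_pmf.expectation (pair_pmf (bernoulli_pmf a) M) G
       = (\<Sum>x\<in>UNIV \<times> set_pmf M. pmf (pair_pmf (bernoulli_pmf a) M) x *\<^sub>R G x)"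
    by (rule integral_measure_pmf) (use M in \<open>auto simp: set_pair_pmf\<close>)
  also have "\<dots> = (\<Sum>b\<in>UNIV. \<Sum>x\<in>set_pmf M. pmf (bernoulli_pmf a) b * pmf M x * G (b, x))"
    unfolding sum.cartesian_product by (intro sum.cong) (auto simp: pmf_pair)
  also have "\<dots> = a * (\<Sum>x\<in>set_pmf M. pmf M x * G (True, x)) + (1 - a) * (\<Sum>x\<in>set_pmf M. pmf M x * G (False, x))"
    using a by (simp add: UNIV_bool sum_distrib_left mult_ac)
  also have "(\<Sum>x\<in>set_pmf M. pmf M x * G (True, x)) = measure_pmf.expectation M (\<lambda>x. G (True, x))"
    by (subst integral_measure_pmf[OF M]) auto
  also have "(\<Sum>x\<in>set_pmf M. pmf M x * G (False, x)) = measure_pmf.expectation M (\<lambda>x. G (False, x))"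
    by (subst integral_measure_pmf[OF M]) auto
  finally show ?thesis .
qed

lemma Pi_split:
  fixes F :: "(nat \<Rightarrow> bool) \<Rightarrow> real"
  assumes A: "finite A" "i \<notin> A" and q: "0 \<le> q i" "q i \<le> 1"
  shows "measure_pmf.expectation (Pi_pmf (insert i A) False (\<lambda>i. bernoulli_pmf (q i))) F
    = q i * measure_pmf.expectation (Pi_pmf A False (\<lambda>i. bernoulli_pmf (q i))) (\<lambda>w. F (w(i := True)))
      + (1 - q i) * measure_pmf.expectation (Pi_pmf A False (\<lambda>i. bernoulli_pmf (q i))) (\<lambda>w. F (w(i := False)))"
  using A q by (simp add: Pi_pmf_insert case_prod_unfold pair_bern fin_Pi)

lemma split_V:
  fixes H :: "bool \<Rightarrow> nat \<Rightarrow> real" and A :: "nat set" and q :: "nat \<Rightarrow> real"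
  assumes A: "finite A" "i \<in> A" and q: "0 \<le> q i" "q i \<le> 1"
  shows "measure_pmf.expectation (Pi_pmf A False (\<lambda>i. bernoulli_pmf (q i))) (\<lambda>w. H (w i) (\<Sum>j\<in>A. of_bool (w j)))
    = q i * measure_pmf.expectation (Pi_pmf (A - {i}) False (\<lambda>i. bernoulli_pmf (q i))) (\<lambda>w. H True (Suc (\<Sum>j\<in>A-{i}. of_bool (w j))))
      + (1 - q i) * measure_pmf.expectation (Pi_pmf (A - {i}) False (\<lambda>i. bernoulli_pmf (q i))) (\<lambda>w. H False (\<Sum>j\<in>A-{i}. of_bool (w j)))"
proof -
  have AA: "A = insert i (A - {i})" using A by auto
  have su: "(\<Sum>j\<in>A. of_bool ((w(i := b)) j)) = of_bool b + (\<Sum>j\<in>A-{i}. of_bool (w j) :: nat)" for w b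
  proof -
    have "(\<Sum>j\<in>A. of_bool ((w(i := b)) j)) = of_bool b + (\<Sum>j\<in>A-{i}. of_bool ((w(i := b)) j) :: nat)"
      by (subst sum.remove[OF A]) (simp only: fun_upd_same)
    also have "(\<Sum>j\<in>A-{i}. of_bool ((w(i := b)) j) :: nat) = (\<Sum>j\<in>A-{i}. of_bool (w j))"
      by (intro sum.cong) auto
    finally show ?thesis .
  qed
  have "measure_pmf.expectation (Pi_pmf A False (\<lambda>i. bernoulli_pmf (q i))) (\<lambda>w. H (w i) (\<Sum>j\<in>A. of_bool (w j)))
     = measure_pmf.expectation (Pi_pmf (insert i (A - {i})) False (\<lambda>i. bernoulli_pmf (q i))) (\<lambda>w. H (w i) (\<Sum>j\<in>A. of_bool (w j)))"
    using AA by simp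
  also have "\<dots> = q i * measure_pmf.expectation (Pi_pmf (A - {i}) False (\<lambda>i. bernoulli_pmf (q i))) (\<lambda>w. H True (\<Sum>j\<in>A. of_bool ((w(i := True)) j)))
      + (1 - q i) * measure_pmf.expectation (Pi_pmf (A - {i}) False (\<lambda>i. bernoulli_pmf (q i))) (\<lambda>w. H False (\<Sum>j\<in>A. of_bool ((w(i := False)) j)))"
    using Pi_split[of "A - {i}" i q "\<lambda>w. H (w i) (\<Sum>j\<in>A. of_bool (w j))"] A q by simp
  finally show ?thesis unfolding su by simp
qed

lemma abs_exp_le:
  fixes f :: "'a \<Rightarrow> real"
  assumes "\<And>x. \<bar>f x\<bar> \<le> M" and "integrable (measure_pmf P) f"
  shows "\<bar>measure_pmf.expectation P f\<bar> \<le> M"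
proof -
  have b1: "- M \<le> f x" "f x \<le> M" for x using assms(1)[of x] by linarith+
  have "measure_pmf.expectation P f \<le> measure_pmf.expectation P (\<lambda>_. M)"
    using assms b1 by (intro integral_mono) auto
  moreover have "measure_pmf.expectation P (\<lambda>_. - M) \<le> measure_pmf.expectation P f"
    using assms b1 by (intro integral_mono) auto
  ultimately show ?thesis by simp
qed

lemma stein_bern:
  fixes g :: "nat \<Rightarrow> real" and A :: "nat set" and r p M :: real
  assumes A: "finite A" and q: "\<And>i. i \<in> A \<Longrightarrow> 0 \<le> q i \<and> q i \<le> 1" and p: "0 < p" "p \<le> 1"
    and rel: "r * (1 - p) = p * (\<Sum>i\<in>A. q i)"
    and Mb: "\<And>k. \<bar>g (k + 2) - g (k + 1)\<bar> \<le> M"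
  shows "\<bar>measure_pmf.expectation (Pi_pmf A False (\<lambda>i. bernoulli_pmf (q i)))
            (\<lambda>w. stein_op r p g (\<Sum>j\<in>A. of_bool (w j)))\<bar> \<le> M * (\<Sum>i\<in>A. q i * (1 - p * (1 - q i)))"
proof -
  define P where "P = Pi_pmf A False (\<lambda>i. bernoulli_pmf (q i))"
  define PP where "PP = (\<lambda>i. Pi_pmf (A - {i}) False (\<lambda>i. bernoulli_pmf (q i)))"
  define V where "V = (\<lambda>w. (\<Sum>j\<in>A. of_bool (w j)) :: nat)"
  define VV where "VV = (\<lambda>i w. (\<Sum>j\<in>A-{i}. of_bool (w j)) :: nat)"
  define a where "a = (\<lambda>i. measure_pmf.expectation (PP i) (\<lambda>w. g (Suc (Suc (VV i w)))))"
  define b where "b = (\<lambda>i. measure_pmf.expectation (PP i) (\<lambda>w. g (Suc (VV i w))))"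
  define G where "G = measure_pmf.expectation P (\<lambda>w. g (Suc (V w)))"
  have iP[simp]: "integrable (measure_pmf P) f" for f :: "_ \<Rightarrow> real" unfolding P_def using A by simp
  have iPP[simp]: "integrable (measure_pmf (PP i)) f" for f :: "_ \<Rightarrow> real" and i unfolding PP_def using A by simp
  have G_eq: "G = q i * a i + (1 - q i) * b i" if i: "i \<in> A" for i
    unfolding G_def a_def b_def P_def PP_def V_def VV_def
    using split_V[OF A i, of q "\<lambda>_ k. g (Suc k)"] q[OF i] by simp
  have T1: "measure_pmf.expectation P (\<lambda>w. of_bool (w i) * g (Suc (V w))) = q i * a i" if i: "i \<in> A" for i
    unfolding a_def P_def PP_def V_def VV_def
    using split_V[OF A i, of q "\<lambda>bb k. of_bool bb * g (Suc k)"] q[OF i] by simp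
  have T2: "measure_pmf.expectation P (\<lambda>w. of_bool (w i) * g (V w)) = q i * b i" if i: "i \<in> A" for i
    unfolding b_def P_def PP_def V_def VV_def
    using split_V[OF A i, of q "\<lambda>bb k. of_bool bb * g k"] q[OF i] by simp
  have rV: "real (V w) = (\<Sum>i\<in>A. of_bool (w i))" for w unfolding V_def by simp
  have "(\<lambda>w. stein_op r p g (V w)) = (\<lambda>w. (1 - p) * r * g (Suc (V w))
        + ((1 - p) * (\<Sum>i\<in>A. of_bool (w i) * g (Suc (V w))) - (\<Sum>i\<in>A. of_bool (w i) * g (V w))))"
    unfolding stein_op_def rV by (simp add: algebra_simps sum_distrib_left sum_distrib_right)
  hence "measure_pmf.expectation P (\<lambda>w. stein_op r p g (V w))
      = (1 - p) * r * G + ((1 - p) * (\<Sum>i\<in>A. measure_pmf.expectation P (\<lambda>w. of_bool (w i) * g (Suc (V w))))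
          - (\<Sum>i\<in>A. measure_pmf.expectation P (\<lambda>w. of_bool (w i) * g (V w))))"
    unfolding G_def by (simp add: integral_sum)
  also have "\<dots> = (1 - p) * r * G + ((1 - p) * (\<Sum>i\<in>A. q i * a i) - (\<Sum>i\<in>A. q i * b i))"
    using T1 T2 by simp
  also have "(1 - p) * r * G = (\<Sum>i\<in>A. p * q i * (q i * a i + (1 - q i) * b i))"
  proof -
    have "(1 - p) * r * G = (\<Sum>i\<in>A. p * q i * G)" using rel by (simp add: sum_distrib_left sum_distrib_right mult_ac)
    also have "\<dots> = (\<Sum>i\<in>A. p * q i * (q i * a i + (1 - q i) * b i))" by (intro sum.cong) (auto simp: G_eq)
    finally show ?thesis .
  qed
  also have "(\<Sum>i\<in>A. p * q i * (q i * a i + (1 - q i) * b i)) + ((1 - p) * (\<Sum>i\<in>A. q i * a i) - (\<Sum>i\<in>A. q i * b i))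
     = (\<Sum>i\<in>A. q i * (1 - p * (1 - q i)) * (a i - b i))"
    by (simp add: sum_distrib_left algebra_simps sum.distrib sum_subtractf)
  finally have E: "measure_pmf.expectation P (\<lambda>w. stein_op r p g (V w)) = (\<Sum>i\<in>A. q i * (1 - p * (1 - q i)) * (a i - b i))" .
  have ab: "\<bar>a i - b i\<bar> \<le> M" for i
  proof -
    have "a i - b i = measure_pmf.expectation (PP i) (\<lambda>w. g (Suc (Suc (VV i w))) - g (Suc (VV i w)))"
      unfolding a_def b_def by (simp add: integral_diff)
    also have "\<bar>\<dots>\<bar> \<le> M" using Mb by (intro abs_exp_le) (auto simp: numeral_2_eq_2)
    finally show ?thesis .
  qed
  have "\<bar>\<Sum>i\<in>A. q i * (1 - p * (1 - q i)) * (a i - b i)\<bar> \<le> (\<Sum>i\<in>A. \<bar>q i * (1 - p * (1 - q i)) * (a i - b i)\<bar>)"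
    by (rule sum_abs)
  also have "\<dots> \<le> (\<Sum>i\<in>A. q i * (1 - p * (1 - q i)) * M)"
  proof (intro sum_mono)
    fix i assume i: "i \<in> A"
    have c: "q i * (1 - p * (1 - q i)) \<ge> 0"
    proof -
      have "p * (1 - q i) \<le> 1 * 1" using p q[OF i] by (intro mult_mono) auto
      thus ?thesis using q[OF i] by simp
    qed
    show "\<bar>q i * (1 - p * (1 - q i)) * (a i - b i)\<bar> \<le> q i * (1 - p * (1 - q i)) * M"
      using mult_left_mono[OF ab[of i] c] by (simp only: abs_mult[of "q i * (1 - p * (1 - q i))"] abs_of_nonneg[OF c])
  qed
  finally show ?thesis using E unfolding P_def V_def by (simp add: sum_distrib_left mult_ac)
qed


theorem mainTheorem5:
  fixes n :: nat and ps :: "nat \<Rightarrow> real" and r p :: real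
  assumes ps: "\<And>i. i \<in> {1..n} \<Longrightarrow> 0 \<le> ps i \<and> ps i \<le> 1"
    and r: "r > 1" and p: "0 < p" "p < 1"
    and rel: "r * (1 - p) = p * (\<Sum>i\<in>{1..n}. ps i)"
  shows "\<forall>z\<ge>0. \<bar>measure_pmf.expectation (bern_sum_pmf n ps) (stein_op r p (stein_g r p z))\<bar>
           \<le> (2 * p powr (-(r + 1)) - 1 / p) * (\<Sum>i\<in>{1..n}. ps i * (1 - p * (1 - ps i)))"
proof (intro allI impI)
  fix z :: real assume z: "z \<ge> 0"
  have r0: "r > 0" using r by simp
  have Mb: "\<bar>stein_g r p z (k + 2) - stein_g r p z (k + 1)\<bar> \<le> 1 / p" for k
    using g_bounds[OF p r0 z, of "k+2"] g_bounds[OF p r0 z, of "k+1"] by auto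
  have S0: "0 \<le> (\<Sum>i\<in>{1..n}. ps i * (1 - p * (1 - ps i)))"
  proof (intro sum_nonneg)
    fix i assume i: "i \<in> {1..n}"
    have "p * (1 - ps i) \<le> 1 * 1" using p ps[OF i] by (intro mult_mono) auto
    thus "0 \<le> ps i * (1 - p * (1 - ps i))" using ps[OF i] by simp
  qed
  have C: "1 / p \<le> 2 * p powr (-(r + 1)) - 1 / p"
  proof -
    have "p powr (-1) \<le> p powr (-(r + 1))" using p r by (intro powr_mono') auto
    thus ?thesis using p by (simp add: powr_minus_divide)
  qed
  have "\<bar>measure_pmf.expectation (bern_sum_pmf n ps) (stein_op r p (stein_g r p z))\<bar>
     = \<bar>measure_pmf.expectation (Pi_pmf {1..n} False (\<lambda>i. bernoulli_pmf (ps i)))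
            (\<lambda>w. stein_op r p (stein_g r p z) (\<Sum>j\<in>{1..n}. of_bool (w j)))\<bar>"
    unfolding bern_sum_pmf_def by simp
  also have "\<dots> \<le> 1 / p * (\<Sum>i\<in>{1..n}. ps i * (1 - p * (1 - ps i)))"
    by (rule stein_bern) (use ps p rel Mb in auto)
  also have "\<dots> \<le> (2 * p powr (-(r + 1)) - 1 / p) * (\<Sum>i\<in>{1..n}. ps i * (1 - p * (1 - ps i)))"
    by (rule mult_right_mono[OF C S0])
  finally show "\<bar>measure_pmf.expectation (bern_sum_pmf n ps) (stein_op r p (stein_g r p z))\<bar>
           \<le> (2 * p powr (-(r + 1)) - 1 / p) * (\<Sum>i\<in>{1..n}. ps i * (1 - p * (1 - ps i)))" .
qed

end
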